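(* Let $n\in\mathbb N$ with $n\ge 10$ and let $T_n$ be a tree on $n$ vertices with $\Delta(T_n)=n-4$. Suppose that for every integer $m\ge n$ and every connected graph $H\in\mathrm{Ex}(m;T_n)$ we have $\Delta(H)\le n-5$. Let $p=k(n-1)+r\ge n-1$ with $k\in\mathbb N$ and $r\in\{0,1,\ldots,n-2\}$. Then $$\mathrm{ex}(p;T_n)=\frac{(n-2)p-r(n-1-r)}2+\max\Big\{0,\Big\lfloor\frac{r(n-4-r)-3(n-1)}2\Big\rfloor\Big\}.$$
   Context: All graphs are finite simple graphs; $\Delta(G)$ is the maximum degree of $G$. For a graph $L$, $\mathrm{ex}(p;L)$ is the maximum number of edges in a graph on $p$ vertices containing no subgraph isomorphic to $L$, and $\mathrm{Ex}(p;L)$ is the set of graphs on $p$ vertices containing no copy of $L$ and having exactly $\mathrm{ex}(p;L)$ edges. $\lfloor x\rfloor$ is the greatest integer not exceeding $x$. *)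

theory Defs
  imports Complex_Main
begin

definition simple_graph :: "'a set \<Rightarrow> 'a set set \<Rightarrow> bool" where
  "simple_graph V E \<longleftrightarrow> finite V \<and> (\<forall>e\<in>E. \<exists>u v. u \<noteq> v \<and> u \<in> V \<and> v \<in> V \<and> e = {u, v})"

definition degree :: "'a set \<Rightarrow> 'a set set \<Rightarrow> 'a \<Rightarrow> nat" where
  "degree V E v = card {u \<in> V. {u, v} \<in> E}"

definition max_degree :: "'a set \<Rightarrow> 'a set set \<Rightarrow> nat" where
  "max_degree V E = Max (degree V E ` V)"

definition adj :: "'a set set \<Rightarrow> 'a \<Rightarrow> 'a \<Rightarrow> bool" where
  "adj E u v \<longleftrightarrow> {u, v} \<in> E"

definition connected_graph :: "'a set \<Rightarrow> 'a set set \<Rightarrow> bool" where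
  "connected_graph V E \<longleftrightarrow> V \<noteq> {} \<and> (\<forall>u\<in>V. \<forall>v\<in>V. (adj E)\<^sup>*\<^sup>* u v)"

definition is_tree :: "'a set \<Rightarrow> 'a set set \<Rightarrow> bool" where
  "is_tree V E \<longleftrightarrow> simple_graph V E \<and> connected_graph V E \<and> card E + 1 = card V"

definition contains_copy :: "'b set \<Rightarrow> 'b set set \<Rightarrow> 'a set \<Rightarrow> 'a set set \<Rightarrow> bool" where
  "contains_copy VL EL V E \<longleftrightarrow>
     (\<exists>f. inj_on f VL \<and> f ` VL \<subseteq> V \<and> (\<forall>e\<in>EL. f ` e \<in> E))"

text \<open>Graphs on p vertices are taken, up to isomorphism, with vertex set {0..<p}.\<close>
definition free_graphs :: "nat \<Rightarrow> 'b set \<Rightarrow> 'b set set \<Rightarrow> nat set set set" where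
  "free_graphs p VL EL = {E. simple_graph {0..<p} E \<and> \<not> contains_copy VL EL {0..<p} E}"

definition ex :: "nat \<Rightarrow> 'b set \<Rightarrow> 'b set set \<Rightarrow> nat" where
  "ex p VL EL = Max (card ` free_graphs p VL EL)"

definition Ex :: "nat \<Rightarrow> 'b set \<Rightarrow> 'b set set \<Rightarrow> nat set set set" where
  "Ex p VL EL = {E \<in> free_graphs p VL EL. card E = ex p VL EL}"

end

theory Submission
  imports Defs
begin


lemma free_finite: "finite (free_graphs p VL EL)"
proof -
  have "free_graphs p VL EL \<subseteq> Pow (Pow {0..<p})"
    unfolding free_graphs_def simple_graph_def by auto
  then show ?thesis by (rule finite_subset) auto
qed

lemma ex_ge: "E \<in> free_graphs p VL EL \<Longrightarrow> card E \<le> ex p VL EL"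
  unfolding ex_def using free_finite by (intro Max_ge) auto

lemma ex_attained: "free_graphs p VL EL \<noteq> {} \<Longrightarrow> \<exists>E\<in>free_graphs p VL EL. card E = ex p VL EL"
  unfolding ex_def using free_finite
  by (metis (mono_tags, lifting) Max_in finite_imageI image_iff image_is_empty)

lemma simple_graph_finite: "simple_graph V E \<Longrightarrow> finite E"
proof -
  assume a: "simple_graph V E"
  then have "E \<subseteq> Pow V" unfolding simple_graph_def by auto
  moreover have "finite V" using a unfolding simple_graph_def by auto
  ultimately show ?thesis by (meson finite_Pow_iff finite_subset)
qed

lemma iso_graph:
  assumes inj: "inj_on g V" and sg: "simple_graph V E"
  shows "simple_graph (g ` V) ((`) g ` E)"
    and "card ((`) g ` E) = card E"
    and "contains_copy VL EL (g ` V) ((`) g ` E) \<longleftrightarrow> contains_copy VL EL V E"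
proof -
  have EV: "\<forall>e\<in>E. e \<subseteq> V" using sg unfolding simple_graph_def by auto
  show "simple_graph (g ` V) ((`) g ` E)"
    using sg inj unfolding simple_graph_def
    by (smt (verit, del_insts) image_empty image_eqI image_iff image_insert inj_on_contraD finite_imageI)
  have "inj_on ((`) g) E"
    using EV inj by (meson inj_on_image_eq_iff inj_onI)
  then show "card ((`) g ` E) = card E" by (rule card_image)
  show "contains_copy VL EL (g ` V) ((`) g ` E) \<longleftrightarrow> contains_copy VL EL V E"
  proof
    assume "contains_copy VL EL V E"
    then obtain f where f: "inj_on f VL" "f ` VL \<subseteq> V" "\<forall>e\<in>EL. f ` e \<in> E"
      unfolding contains_copy_def by auto
    have "inj_on (g \<circ> f) VL" using f inj by (simp add: comp_inj_on inj_on_subset)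
    moreover have "(g \<circ> f) ` VL \<subseteq> g ` V" using f by (auto simp: image_comp[symmetric])
    moreover have "\<forall>e\<in>EL. (g \<circ> f) ` e \<in> (`) g ` E" using f by (auto simp: image_comp)
    ultimately show "contains_copy VL EL (g ` V) ((`) g ` E)" unfolding contains_copy_def by blast
  next
    assume "contains_copy VL EL (g ` V) ((`) g ` E)"
    then obtain f where f: "inj_on f VL" "f ` VL \<subseteq> g ` V" "\<forall>e\<in>EL. f ` e \<in> (`) g ` E"
      unfolding contains_copy_def by auto
    define h where "h = the_inv_into V g \<circ> f"
    have "inj_on h VL" unfolding h_def using f inj
      by (meson comp_inj_on inj_on_subset inj_on_the_inv_into)
    moreover have "h ` VL \<subseteq> V" unfolding h_def using f inj
      by (auto intro!: the_inv_into_into)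
    moreover have "\<forall>e\<in>EL. h ` e \<in> E"
    proof
      fix e assume "e \<in> EL"
      then obtain e' where e': "e' \<in> E" "f ` e = g ` e'" using f by auto
      have "h ` e = the_inv_into V g ` (g ` e')" unfolding h_def by (simp add: image_image e'(2)[symmetric])
      also have "\<dots> = e'" using EV e' inj
        by (smt (verit) image_cong image_ident image_image subset_iff the_inv_into_f_f)
      finally show "h ` e \<in> E" using e' by simp
    qed
    ultimately show "contains_copy VL EL V E" unfolding contains_copy_def by blast
  qed
qed

lemma transport:
  fixes V :: "'v set"
  assumes sg: "simple_graph V E" and nc: "\<not> contains_copy VL EL V E"
  shows "card E \<le> ex (card V) VL EL"
proof -
  have fin: "finite V" using sg unfolding simple_graph_def by auto
  obtain g where g: "bij_betw g V {0..<card V}" using ex_bij_betw_finite_nat[OF fin] by auto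
  have inj: "inj_on g V" and im: "g ` V = {0..<card V}" using g by (auto simp: bij_betw_def)
  note I = iso_graph[OF inj sg, unfolded im]
  have "(`) g ` E \<in> free_graphs (card V) VL EL"
    unfolding free_graphs_def using I(1) I(3) nc by auto
  then have "card ((`) g ` E) \<le> ex (card V) VL EL" by (rule ex_ge)
  then show ?thesis using I(2) by simp
qed



lemma degree_alt:
  assumes sg: "simple_graph V E"
  shows "degree V E v = card {e\<in>E. v \<in> e}"
proof -
  have "bij_betw (\<lambda>u. {u, v}) {u \<in> V. {u, v} \<in> E} {e\<in>E. v \<in> e}"
  proof (rule bij_betwI')
    show "\<And>x y. x \<in> {u \<in> V. {u, v} \<in> E} \<Longrightarrow> y \<in> {u \<in> V. {u, v} \<in> E} \<Longrightarrow> ({x, v} = {y, v}) = (x = y)"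
      by (metis doubleton_eq_iff)
    show "\<And>x. x \<in> {u \<in> V. {u, v} \<in> E} \<Longrightarrow> {x, v} \<in> {e \<in> E. v \<in> e}" by auto
    fix y assume "y \<in> {e \<in> E. v \<in> e}"
    then obtain a b where "a \<noteq> b" "a \<in> V" "b \<in> V" "y = {a,b}" "y \<in> E" "v \<in> y"
      using sg unfolding simple_graph_def by blast
    then show "\<exists>x\<in>{u \<in> V. {u, v} \<in> E}. y = {x, v}"
    proof (cases "v = a")
      case True
      then show ?thesis using \<open>b \<in> V\<close> \<open>y = {a,b}\<close> \<open>y \<in> E\<close> by (intro bexI[of _ b]) (auto simp: insert_commute)
    next
      case False
      then have "v = b" using \<open>v \<in> y\<close> \<open>y = {a,b}\<close> by auto
      then show ?thesis using \<open>a \<in> V\<close> \<open>y = {a,b}\<close> \<open>y \<in> E\<close> by (intro bexI[of _ a]) auto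
    qed
  qed
  then show ?thesis unfolding degree_def by (rule bij_betw_same_card)
qed

lemma handshake:
  assumes sg: "simple_graph V E"
  shows "(\<Sum>v\<in>V. degree V E v) = 2 * card E"
proof -
  have fV: "finite V" using sg unfolding simple_graph_def by auto
  have fE: "finite E" using simple_graph_finite[OF sg] .
  have "(\<Sum>v\<in>V. degree V E v) = (\<Sum>v\<in>V. \<Sum>e\<in>E. if v \<in> e then 1 else 0)"
    by (auto simp: degree_alt[OF sg] sum.If_cases fE intro!: sum.cong arg_cong[where f=card])
  also have "\<dots> = (\<Sum>e\<in>E. \<Sum>v\<in>V. if v \<in> e then 1 else 0)" by (rule sum.swap)
  also have "\<dots> = (\<Sum>e\<in>E. 2)"
  proof (rule sum.cong)
    fix e assume "e \<in> E"
    then obtain a b where "a \<noteq> b" "a \<in> V" "b \<in> V" "e = {a,b}"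
      using sg unfolding simple_graph_def by blast
    then have "V \<inter> e = {a,b}" by auto
    then show "(\<Sum>v\<in>V. if v \<in> e then 1 else 0) = (2::nat)"
      using \<open>a \<noteq> b\<close> by (simp add: sum.If_cases fV)
  qed simp
  finally show ?thesis by simp
qed

lemma edges_deg_bound:
  assumes sg: "simple_graph V E" and d: "\<forall>v\<in>V. degree V E v \<le> d"
  shows "2 * card E \<le> card V * d"
proof -
  have "(\<Sum>v\<in>V. degree V E v) \<le> (\<Sum>v\<in>V. d)" by (rule sum_mono) (use d in auto)
  then show ?thesis using handshake[OF sg] by simp
qed

lemma edges_clique_bound:
  assumes sg: "simple_graph V E"
  shows "card E \<le> card V * (card V - 1) div 2"
proof -
  have fV: "finite V" using sg unfolding simple_graph_def by auto
  have "E \<subseteq> {B. B \<subseteq> V \<and> card B = 2}" using sg unfolding simple_graph_def by auto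
  then have "card E \<le> card {B. B \<subseteq> V \<and> card B = 2}"
    by (rule card_mono[rotated]) (simp add: fV)
  then show ?thesis by (simp add: n_subsets[OF fV] choose_two)
qed


locale treeT =
  fixes VT :: "'a set" and ET :: "'a set set" and n :: nat
  assumes tree: "is_tree VT ET" and cardVT: "card VT = n" and n10: "n \<ge> 10"
    and maxd: "max_degree VT ET = n - 4"
begin

lemma finVT: "finite VT" using tree unfolding is_tree_def simple_graph_def by auto
lemma VTne: "VT \<noteq> {}" using cardVT n10 by auto
lemma ETne: "ET \<noteq> {}" using tree cardVT n10 unfolding is_tree_def by auto
lemma ET_sub: "e \<in> ET \<Longrightarrow> \<exists>u v. u \<noteq> v \<and> u \<in> VT \<and> v \<in> VT \<and> e = {u,v}"
  using tree unfolding is_tree_def simple_graph_def by auto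

lemma deg_vertex: "\<exists>v\<in>VT. degree VT ET v = n - 4"
proof -
  have "Max (degree VT ET ` VT) \<in> degree VT ET ` VT" by (rule Max_in) (auto simp: finVT VTne)
  then show ?thesis using maxd unfolding max_degree_def by auto
qed

lemma nocopy_small:
  assumes "finite V" "card V < n" shows "\<not> contains_copy VT ET V E"
proof
  assume "contains_copy VT ET V E"
  then obtain f where "inj_on f VT" "f ` VT \<subseteq> V" unfolding contains_copy_def by auto
  then have "card VT \<le> card V" using assms(1) by (meson card_inj_on_le)
  then show False using assms cardVT by simp
qed

lemma nocopy_deg:
  assumes "finite V" "\<forall>v\<in>V. degree V E v \<le> n - 5" shows "\<not> contains_copy VT ET V E"
proof
  assume "contains_copy VT ET V E"
  then obtain f where f: "inj_on f VT" "f ` VT \<subseteq> V" "\<forall>e\<in>ET. f ` e \<in> E"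
    unfolding contains_copy_def by auto
  obtain v0 where v0: "v0 \<in> VT" "degree VT ET v0 = n - 4" using deg_vertex by auto
  let ?N = "{u \<in> VT. {u, v0} \<in> ET}"
  have "f ` ?N \<subseteq> {w \<in> V. {w, f v0} \<in> E}"
  proof
    fix w assume "w \<in> f ` ?N"
    then obtain u where u: "u \<in> VT" "{u,v0} \<in> ET" "w = f u" by auto
    have "f ` {u, v0} = {w, f v0}" using u by auto
    then show "w \<in> {w \<in> V. {w, f v0} \<in> E}" using f u by auto
  qed
  then have "card (f ` ?N) \<le> degree V E (f v0)" unfolding degree_def
    using assms(1) by (intro card_mono) auto
  moreover have "card (f ` ?N) = card ?N" by (rule card_image) (rule inj_on_subset[OF f(1)], auto)
  moreover have "card ?N = n - 4" using v0 by (simp add: degree_def)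
  moreover have "degree V E (f v0) \<le> n - 5" using assms(2) f(2) v0(1) by auto
  ultimately show False using n10 by linarith
qed

lemma conn_side:
  assumes f: "\<forall>e\<in>ET. f ` e \<in> E" and sides: "\<forall>e\<in>E. e \<subseteq> V1 \<or> e \<subseteq> V2"
    and disj: "V1 \<inter> V2 = {}" and x: "x \<in> VT" "f x \<in> V1"
    and path: "(adj ET)\<^sup>*\<^sup>* x y"
  shows "y \<in> VT \<and> f y \<in> V1"
  using path
proof (induction rule: rtranclp_induct)
  case base then show ?case using x by auto
next
  case (step y z)
  then have e: "{y,z} \<in> ET" unfolding adj_def by auto
  obtain u w where uw: "u \<in> VT" "w \<in> VT" "{y,z} = {u,w}" using ET_sub[OF e] by blast
  have "z \<in> {u,w}" using uw(3) by (metis insertCI)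
  then have "z \<in> VT" using uw by auto
  have "f ` {y,z} \<in> E" using f e by auto
  then have "{f y, f z} \<subseteq> V1 \<or> {f y, f z} \<subseteq> V2" using sides by auto
  then show ?case using step disj \<open>z \<in> VT\<close> by auto
qed

lemma union_nocopy:
  assumes nc1: "\<not> contains_copy VT ET V1 E1" and nc2: "\<not> contains_copy VT ET V2 E2"
    and s1: "\<forall>e\<in>E1. e \<subseteq> V1" and s2: "\<forall>e\<in>E2. e \<subseteq> V2" and disj: "V1 \<inter> V2 = {}"
  shows "\<not> contains_copy VT ET (V1 \<union> V2) (E1 \<union> E2)"
proof
  assume "contains_copy VT ET (V1 \<union> V2) (E1 \<union> E2)"
  then obtain f where f: "inj_on f VT" "f ` VT \<subseteq> V1 \<union> V2" "\<forall>e\<in>ET. f ` e \<in> E1 \<union> E2"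
    unfolding contains_copy_def by auto
  obtain x where x: "x \<in> VT" using VTne by auto
  have conn: "\<forall>y\<in>VT. (adj ET)\<^sup>*\<^sup>* x y" using tree x unfolding is_tree_def connected_graph_def by auto
  have sides: "\<forall>e\<in>E1 \<union> E2. e \<subseteq> V1 \<or> e \<subseteq> V2" using s1 s2 by auto
  have edge_ne: "\<forall>e\<in>ET. f ` e \<noteq> {}" using ET_sub by fastforce
  show False
  proof (cases "f x \<in> V1")
    case True
    have all: "\<forall>y\<in>VT. f y \<in> V1" using conn_side[OF f(3) sides disj x True] conn by auto
    have "\<forall>e\<in>ET. f ` e \<in> E1"
    proof
      fix e assume e: "e \<in> ET"
      obtain u w where uw: "u \<in> VT" "w \<in> VT" "e = {u,w}" using ET_sub[OF e] by blast
      have sub: "f ` e \<subseteq> V1" using all uw by auto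
      have ne: "f u \<in> f ` e" using uw by auto
      have "f ` e \<in> E1 \<union> E2" using f e by auto
      moreover have "f ` e \<notin> E2"
      proof
        assume "f ` e \<in> E2"
        then have "f ` e \<subseteq> V2" using s2 by auto
        then show False using sub ne disj by auto
      qed
      ultimately show "f ` e \<in> E1" by auto
    qed
    then have "contains_copy VT ET V1 E1" unfolding contains_copy_def using f(1) all by blast
    then show False using nc1 by simp
  next
    case False
    then have x2: "f x \<in> V2" using f(2) x by auto
    have disj': "V2 \<inter> V1 = {}" using disj by auto
    have sides': "\<forall>e\<in>E1 \<union> E2. e \<subseteq> V2 \<or> e \<subseteq> V1" using sides by auto
    have all: "\<forall>y\<in>VT. f y \<in> V2" using conn_side[OF f(3) sides' disj' x x2] conn by auto
    have "\<forall>e\<in>ET. f ` e \<in> E2"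
    proof
      fix e assume e: "e \<in> ET"
      obtain u w where uw: "u \<in> VT" "w \<in> VT" "e = {u,w}" using ET_sub[OF e] by blast
      have sub: "f ` e \<subseteq> V2" using all uw by auto
      have ne: "f u \<in> f ` e" using uw by auto
      have "f ` e \<in> E1 \<union> E2" using f e by auto
      moreover have "f ` e \<notin> E1"
      proof
        assume "f ` e \<in> E1"
        then have "f ` e \<subseteq> V1" using s1 by auto
        then show False using sub ne disj by auto
      qed
      ultimately show "f ` e \<in> E2" by auto
    qed
    then have "contains_copy VT ET V2 E2" unfolding contains_copy_def using f(1) all by blast
    then show False using nc2 by simp
  qed
qed

lemma free_ne: "free_graphs p VT ET \<noteq> {}"
proof -
  have "{} \<in> free_graphs p VT ET" unfolding free_graphs_def simple_graph_def contains_copy_def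
    using ETne by auto
  then show ?thesis by auto
qed

end


definition cc :: "nat \<Rightarrow> nat" where "cc x = x * (x - 1) div 2"
definition SS :: "nat \<Rightarrow> nat \<Rightarrow> nat" where "SS n q = (n - 5) * q div 2"

lemma cc2: "2 * cc x = x * (x - 1)"
proof (cases x)
  case 0 then show ?thesis by (simp add: cc_def)
next
  case (Suc m)
  have "even (Suc m * m)" by simp
  then show ?thesis using Suc by (simp add: cc_def)
qed

lemma cc_int: "2 * int (cc x) = int x * (int x - 1)"
proof -
  have "int (2 * cc x) = int (x * (x - 1))" using cc2 by simp
  then show ?thesis by (cases x) (auto simp: algebra_simps)
qed

lemma cc_mono: "x \<le> y \<Longrightarrow> cc x \<le> cc y"
  unfolding cc_def by (intro div_le_mono mult_mono) auto

lemma div2_add: "(a::nat) div 2 + b div 2 \<le> (a + b) div 2" by presburger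

lemma SS_superadd: "SS n x + SS n y \<le> SS n (x + y)"
  unfolding SS_def using div2_add[of "(n-5)*x" "(n-5)*y"] by (simp add: add_mult_distrib2)

lemma SS_mono: "x \<le> y \<Longrightarrow> SS n x \<le> SS n y"
  unfolding SS_def by (intro div_le_mono mult_mono) auto

lemma SS_int_le: "n \<ge> 5 \<Longrightarrow> 2 * int (SS n q) \<le> (int n - 5) * int q"
proof -
  assume n: "n \<ge> 5"
  have "2 * SS n q \<le> (n - 5) * q" unfolding SS_def by simp
  then have "int (2 * SS n q) \<le> int ((n - 5) * q)" by (simp only: of_nat_le_iff)
  then show ?thesis using n by (simp add: of_nat_diff)
qed

lemma SS_int_ge: "n \<ge> 5 \<Longrightarrow> (int n - 5) * int q \<le> 2 * int (SS n q) + 1"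
proof -
  assume n: "n \<ge> 5"
  have "(n - 5) * q \<le> 2 * SS n q + 1" unfolding SS_def by simp
  then have "int ((n - 5) * q) \<le> int (2 * SS n q + 1)" by (simp only: of_nat_le_iff)
  then show ?thesis using n by (simp add: of_nat_diff)
qed

lemma cc_le_SS: "r \<le> n - 4 \<Longrightarrow> cc r \<le> SS n r"
  unfolding cc_def SS_def
  by (intro div_le_mono) (metis diff_le_mono mult.commute mult_le_mono2 diff_diff_left numeral_Bit1 numeral_One add.commute nat_mult_le_cancel_disj one_plus_numeral semiring_norm(5) Suc_eq_plus1 numeral_plus_one)

locale ar =
  fixes n N :: nat
  assumes n10: "n \<ge> 10" and NN: "N = n - 1"
begin

lemma iN: "int n = int N + 1" using NN n10 by simp
lemma SSle: "2 * int (SS n q) \<le> (int n - 5) * int q" using SS_int_le n10 by simp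
lemma SSge: "(int n - 5) * int q \<le> 2 * int (SS n q) + 1" using SS_int_ge n10 by simp

lemma C1: "cc r1 + cc r2 \<le> cc (r1 + r2)"
proof -
  have "2 * int (cc r1) + 2 * int (cc r2) \<le> 2 * int (cc (r1 + r2))"
    unfolding cc_int by (simp add: algebra_simps)
  then show ?thesis by simp
qed

lemma C2:
  assumes "r1 < N" "r2 < N" "N \<le> r1 + r2"
  shows "cc r1 + cc r2 \<le> cc N + cc (r1 + r2 - N)"
proof -
  have s: "int (r1 + r2 - N) = int r1 + int r2 - int N" using assms by simp
  have p: "0 \<le> (int N - int r1) * (int N - int r2)" using assms by simp
  have "int N * (int N - 1) + (int r1 + int r2 - int N) * (int r1 + int r2 - int N - 1)
        - int r1 * (int r1 - 1) - int r2 * (int r2 - 1) = 2 * ((int N - int r1) * (int N - int r2))"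
    by (simp add: algebra_simps)
  then have "2 * int (cc r1) + 2 * int (cc r2) \<le> 2 * int (cc N) + 2 * int (cc (r1 + r2 - N))"
    unfolding cc_int s using p by linarith
  then show ?thesis by simp
qed


lemma C3:
  assumes "r1 + r2 < N"
  shows "cc r1 + SS n (N + r2) \<le> cc N + cc (r1 + r2) \<or> cc r1 + SS n (N + r2) \<le> SS n (N + r1 + r2)"
proof (cases "r1 \<le> n - 4")
  case True
  have "cc r1 + SS n (N + r2) \<le> SS n r1 + SS n (N + r2)" using cc_le_SS[OF True] by simp
  also have "\<dots> \<le> SS n (r1 + (N + r2))" by (rule SS_superadd)
  finally show ?thesis by (simp add: add.commute add.left_commute)
next
  case False
  then have r2: "r2 \<le> 1" using assms NN n10 by linarith
  have "2 * int (SS n (N + r2)) \<le> (int n - 5) * int (N + r2)" by (rule SSle)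
  also have "\<dots> \<le> (int n - 5) * int n" using r2 NN n10 by (intro mult_left_mono) auto
  also have "\<dots> \<le> int N * (int N - 1)" using iN n10 by (simp add: algebra_simps)
  finally have "SS n (N + r2) \<le> cc N" using cc_int[of N] by linarith
  moreover have "cc r1 \<le> cc (r1 + r2)" by (rule cc_mono) simp
  ultimately show ?thesis by simp
qed

lemma C4:
  assumes "r1 < N" "r2 < N" "N \<le> r1 + r2"
  shows "cc r1 + SS n (N + r2) \<le> cc N + SS n (N + (r1 + r2 - N))"
proof -
  have s: "int (N + (r1 + r2 - N)) = int r1 + int r2" using assms by simp
  have a: "2 * int (SS n (N + r2)) \<le> (int n - 5) * (int N + int r2)" using SSle[of "N + r2"] by simp
  have b: "(int n - 5) * (int r1 + int r2) \<le> 2 * int (SS n (N + (r1 + r2 - N))) + 1"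
    using SSge[of "N + (r1 + r2 - N)"] s by simp
  have p: "1 * 1 \<le> (int N - int r1) * (int r1 + 3)" using assms by (intro mult_mono) auto
  have e: "int N * (int N - 1) - int r1 * (int r1 - 1) - (int N - 4) * (int N - int r1)
      = (int N - int r1) * (int r1 + 3)" by (simp add: algebra_simps)
  have "(int n - 5) * (int N + int r2) - (int n - 5) * (int r1 + int r2) = (int N - 4) * (int N - int r1)"
    using iN by (simp add: algebra_simps)
  then have "2 * int (cc r1) + 2 * int (SS n (N + r2)) \<le> 2 * int (cc N) + 2 * int (SS n (N + (r1 + r2 - N)))"
    unfolding cc_int using a b p e by linarith
  then show ?thesis by simp
qed

lemma C5: "SS n (N + r1) + SS n (N + r2) \<le> cc N + SS n (N + r1 + r2)"
proof -
  have a1: "2 * int (SS n (N + r1)) \<le> (int n - 5) * (int N + int r1)" using SSle[of "N + r1"] by simp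
  have a2: "2 * int (SS n (N + r2)) \<le> (int n - 5) * (int N + int r2)" using SSle[of "N + r2"] by simp
  have b: "(int n - 5) * (int N + int r1 + int r2) \<le> 2 * int (SS n (N + r1 + r2)) + 1"
    using SSge[of "N + r1 + r2"] by simp
  have e: "(int n - 5) * (int N + int r1) + (int n - 5) * (int N + int r2) - (int n - 5) * (int N + int r1 + int r2)
     = int N * (int N - 1) - 3 * int N" using iN by (simp add: algebra_simps)
  have N1: "int N \<ge> 1" using NN n10 by simp
  have "2 * int (SS n (N + r1)) + 2 * int (SS n (N + r2)) \<le> 2 * int (cc N) + 2 * int (SS n (N + r1 + r2))"
    unfolding cc_int using a1 a2 b e N1 by linarith
  then show ?thesis by simp
qed

lemma C6:
  assumes "N \<le> r1 + r2"
  shows "SS n (N + r1) + SS n (N + r2) \<le> 2 * cc N + SS n (N + (r1 + r2 - N))"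
proof -
  have s: "int (N + (r1 + r2 - N)) = int r1 + int r2" using assms by simp
  have a1: "2 * int (SS n (N + r1)) \<le> (int n - 5) * (int N + int r1)" using SSle[of "N + r1"] by simp
  have a2: "2 * int (SS n (N + r2)) \<le> (int n - 5) * (int N + int r2)" using SSle[of "N + r2"] by simp
  have b: "(int n - 5) * (int r1 + int r2) \<le> 2 * int (SS n (N + (r1 + r2 - N))) + 1"
    using SSge[of "N + (r1 + r2 - N)"] s by simp
  have e: "(int n - 5) * (int N + int r1) + (int n - 5) * (int N + int r2) - (int n - 5) * (int r1 + int r2)
     = 2 * (int N * (int N - 1)) - 6 * int N" using iN by (simp add: algebra_simps)
  have N1: "int N \<ge> 1" using NN n10 by simp
  have "2 * int (SS n (N + r1)) + 2 * int (SS n (N + r2)) \<le> 2 * (2 * int (cc N)) + 2 * int (SS n (N + (r1 + r2 - N)))"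
    unfolding cc_int using a1 a2 b e N1 by linarith
  then show ?thesis by simp
qed

lemma C7:
  assumes "k \<ge> 1"
  shows "SS n (k * N + r) \<le> (k - 1) * cc N + SS n (N + r)"
proof (cases "k = 1")
  case True then show ?thesis by simp
next
  case False
  define j where "j = k - 1"
  have k: "k = j + 1" and j: "j \<ge> 1" using assms False by (auto simp: j_def)
  have a: "2 * int (SS n (k * N + r)) \<le> (int n - 5) * (int j * int N + int N + int r)"
    using SSle[of "k * N + r"] k by (simp add: algebra_simps)
  have b: "(int n - 5) * (int N + int r) \<le> 2 * int (SS n (N + r)) + 1"
    using SSge[of "N + r"] by simp
  have e: "(int n - 5) * (int j * int N + int N + int r) - (int n - 5) * (int N + int r)
     = int j * (int N * (int N - 1)) - 3 * (int j * int N)" using iN by (simp add: algebra_simps)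
  have p: "1 * 1 \<le> int j * int N" using j NN n10 by (intro mult_mono) auto
  have c: "2 * int ((k - 1) * cc N) = int j * (2 * int (cc N))" by (simp add: j_def)
  have c': "2 * int ((k - 1) * cc N) = int j * (int N * (int N - 1))" using c cc_int[of N] by simp
  have "2 * int (SS n (k * N + r)) \<le> 2 * int ((k - 1) * cc N) + 2 * int (SS n (N + r))"
    using c' a b e p by linarith
  then have "int (SS n (k * N + r)) \<le> int ((k - 1) * cc N + SS n (N + r))" by (simp only: of_nat_add)
  then show ?thesis by (simp only: of_nat_le_iff)
qed

lemma Npos: "N > 0" using NN n10 by simp

lemma kr_div: "r < N \<Longrightarrow> (k * N + r) div N = k" using Npos by simp
lemma kr_mod: "r < N \<Longrightarrow> (k * N + r) mod N = r" using Npos by simp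

definition AA :: "nat \<Rightarrow> nat" where "AA p = (p div N) * cc N + cc (p mod N)"
definition BB :: "nat \<Rightarrow> nat" where
  "BB p = (if p div N \<ge> 1 then (p div N - 1) * cc N + SS n (N + p mod N) else 0)"
definition Phi :: "nat \<Rightarrow> nat" where "Phi p = max (AA p) (BB p)"

lemma AA_kr: "r < N \<Longrightarrow> AA (k * N + r) = k * cc N + cc r"
  unfolding AA_def using kr_div kr_mod by simp
lemma BB_kr: "r < N \<Longrightarrow> BB (Suc j * N + r) = j * cc N + SS n (N + r)"
  unfolding BB_def using kr_div[of r "Suc j"] kr_mod[of r "Suc j"] by simp
lemma BB0: "r < N \<Longrightarrow> BB (0 * N + r) = 0"
  unfolding BB_def using kr_div[of r 0] by simp

lemma decomp: obtains k r where "p = k * N + r" "r < N"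
  using Npos by (metis div_mult_mod_eq mod_less_divisor)

lemma AA_le_Phi: "AA p \<le> Phi p" unfolding Phi_def by simp
lemma BB_le_Phi: "BB p \<le> Phi p" unfolding Phi_def by simp

lemma sum_nc: "r1 < N \<Longrightarrow> r2 < N \<Longrightarrow> r1 + r2 < N \<Longrightarrow> k1 * N + r1 + (k2 * N + r2) = (k1 + k2) * N + (r1 + r2)"
  by (simp add: algebra_simps)
lemma sum_c: "r1 < N \<Longrightarrow> r2 < N \<Longrightarrow> N \<le> r1 + r2 \<Longrightarrow>
   k1 * N + r1 + (k2 * N + r2) = Suc (k1 + k2) * N + (r1 + r2 - N)"
  by (simp add: algebra_simps)

lemma L_AA: "AA a + AA b \<le> Phi (a + b)"
proof -
  obtain k1 r1 where a: "a = k1 * N + r1" "r1 < N" by (rule decomp)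
  obtain k2 r2 where b: "b = k2 * N + r2" "r2 < N" by (rule decomp)
  show ?thesis
  proof (cases "r1 + r2 < N")
    case True
    have ab: "a + b = (k1 + k2) * N + (r1 + r2)" using a b by (simp add: algebra_simps)
    have "AA a + AA b = k1 * cc N + k2 * cc N + (cc r1 + cc r2)" using a b AA_kr by simp
    also have "\<dots> \<le> (k1 + k2) * cc N + cc (r1 + r2)" using C1[of r1 r2] by (simp add: algebra_simps)
    also have "\<dots> = AA (a + b)" unfolding ab using True AA_kr[of "r1 + r2" "k1 + k2"] by simp
    finally show ?thesis using AA_le_Phi order_trans by blast
  next
    case False
    then have F: "N \<le> r1 + r2" by simp
    have s: "r1 + r2 - N < N" using a b by simp
    have ab: "a + b = Suc (k1 + k2) * N + (r1 + r2 - N)" using a b F by (simp add: algebra_simps)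
    have "AA a + AA b = k1 * cc N + k2 * cc N + (cc r1 + cc r2)" using a b AA_kr by simp
    also have "\<dots> \<le> Suc (k1 + k2) * cc N + cc (r1 + r2 - N)" using C2[OF a(2) b(2) F] by (simp add: algebra_simps)
    also have "\<dots> = AA (a + b)" unfolding ab using AA_kr[OF s, of "Suc (k1 + k2)"] by simp
    finally show ?thesis using AA_le_Phi order_trans by blast
  qed
qed

lemma L_AB: "AA a + BB b \<le> Phi (a + b)"
proof -
  obtain k1 r1 where a: "a = k1 * N + r1" "r1 < N" by (rule decomp)
  obtain k2 r2 where b: "b = k2 * N + r2" "r2 < N" by (rule decomp)
  show ?thesis
  proof (cases k2)
    case 0
    then have "BB b = 0" using b BB0 by simp
    then show ?thesis using L_AA[of a b] by simp
  next
    case (Suc j2)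
    have BBb: "BB b = j2 * cc N + SS n (N + r2)" using b Suc BB_kr by simp
    show ?thesis
    proof (cases "r1 + r2 < N")
      case True
      have ab: "a + b = (k1 + k2) * N + (r1 + r2)" using a b True by (simp add: algebra_simps)
      have ab': "a + b = Suc (k1 + j2) * N + (r1 + r2)" using ab Suc by simp
      consider "cc r1 + SS n (N + r2) \<le> cc N + cc (r1 + r2)" | "cc r1 + SS n (N + r2) \<le> SS n (N + r1 + r2)"
        using C3[OF True] by blast
      then show ?thesis
      proof cases
        case 1
        have "AA a + BB b = k1 * cc N + j2 * cc N + (cc r1 + SS n (N + r2))" using a AA_kr BBb by simp
        also have "\<dots> \<le> (k1 + k2) * cc N + cc (r1 + r2)" using 1 Suc by (simp add: algebra_simps)
        also have "\<dots> = AA (a + b)" using ab True AA_kr by simp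
        finally show ?thesis using AA_le_Phi order_trans by blast
      next
        case 2
        have "AA a + BB b = k1 * cc N + j2 * cc N + (cc r1 + SS n (N + r2))" using a AA_kr BBb by simp
        also have "\<dots> \<le> (k1 + j2) * cc N + SS n (N + (r1 + r2))" using 2 by (simp add: algebra_simps)
        also have "\<dots> = BB (a + b)" using ab' True BB_kr by simp
        finally show ?thesis using BB_le_Phi order_trans by blast
      qed
    next
      case False
      then have F: "N \<le> r1 + r2" by simp
      have s: "r1 + r2 - N < N" using a b by simp
      have ab: "a + b = Suc (k1 + k2) * N + (r1 + r2 - N)" using a b F by (simp add: algebra_simps)
      have "AA a + BB b = k1 * cc N + j2 * cc N + (cc r1 + SS n (N + r2))" using a AA_kr BBb by simp
      also have "\<dots> \<le> (k1 + k2) * cc N + SS n (N + (r1 + r2 - N))" using C4[OF a(2) b(2) F] Suc by (simp add: algebra_simps)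
      also have "\<dots> = BB (a + b)" using ab BB_kr[OF s] by simp
      finally show ?thesis using BB_le_Phi order_trans by blast
    qed
  qed
qed

lemma L_BB: "BB a + BB b \<le> Phi (a + b)"
proof -
  obtain k1 r1 where a: "a = k1 * N + r1" "r1 < N" by (rule decomp)
  obtain k2 r2 where b: "b = k2 * N + r2" "r2 < N" by (rule decomp)
  show ?thesis
  proof (cases k1)
    case 0
    then have "BB a = 0" using a BB0 by simp
    then show ?thesis using L_AB[of a b] by simp
  next
    case (Suc j1)
    have BBa: "BB a = j1 * cc N + SS n (N + r1)" using a Suc BB_kr by simp
    show ?thesis
    proof (cases k2)
      case 0
      then have "BB b = 0" using b BB0 by simp
      then show ?thesis using L_AB[of b a] by (simp add: add.commute)
    next
      case (Suc j2)
      have BBb: "BB b = j2 * cc N + SS n (N + r2)" using b Suc BB_kr by simp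
      show ?thesis
      proof (cases "r1 + r2 < N")
        case True
        have ab: "a + b = Suc (Suc (j1 + j2)) * N + (r1 + r2)" using a b True \<open>k1 = Suc j1\<close> Suc by (simp add: algebra_simps)
        have "BB a + BB b = j1 * cc N + j2 * cc N + (SS n (N + r1) + SS n (N + r2))" using BBa BBb by simp
        also have "\<dots> \<le> Suc (j1 + j2) * cc N + SS n (N + (r1 + r2))" using C5[of r1 r2] by (simp add: algebra_simps)
        also have "\<dots> = BB (a + b)" unfolding ab by (rule BB_kr[OF True, symmetric])
        finally show ?thesis using BB_le_Phi order_trans by blast
      next
        case False
        then have F: "N \<le> r1 + r2" by simp
        have s: "r1 + r2 - N < N" using a b by simp
        have ab: "a + b = Suc (Suc (Suc (j1 + j2))) * N + (r1 + r2 - N)" using a b F \<open>k1 = Suc j1\<close> Suc by (simp add: algebra_simps)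
        have "BB a + BB b = j1 * cc N + j2 * cc N + (SS n (N + r1) + SS n (N + r2))" using BBa BBb by simp
        also have "\<dots> \<le> Suc (Suc (j1 + j2)) * cc N + SS n (N + (r1 + r2 - N))" using C6[OF F] by (simp add: algebra_simps)
        also have "\<dots> = BB (a + b)" unfolding ab by (rule BB_kr[OF s, symmetric])
        finally show ?thesis using BB_le_Phi order_trans by blast
      qed
    qed
  qed
qed

lemma Phi_superadd: "Phi a + Phi b \<le> Phi (a + b)"
  using L_AA[of a b] L_AB[of a b] L_AB[of b a] L_BB[of a b]
  unfolding Phi_def[of a] Phi_def[of b] by (auto simp: add.commute max_def)

lemma Phi_small: "p \<le> N \<Longrightarrow> cc p \<le> Phi p"
proof -
  assume p: "p \<le> N"
  show ?thesis
  proof (cases "p = N")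
    case True
    have "AA (1 * N + 0) = cc N" using AA_kr[of 0 1] Npos by (simp add: cc_def)
    then show ?thesis using True AA_le_Phi[of N] by simp
  next
    case False
    then have "p < N" using p by simp
    then have "AA p = cc p" using AA_kr[of p 0] by simp
    then show ?thesis using AA_le_Phi[of p] by simp
  qed
qed

lemma Phi_big: "n \<le> p \<Longrightarrow> SS n p \<le> Phi p"
proof -
  assume p: "n \<le> p"
  obtain k r where kr: "p = k * N + r" "r < N" by (rule decomp)
  have "k \<ge> 1" using kr p NN by (cases k) auto
  then obtain j where j: "k = Suc j" by (cases k) auto
  have "SS n p \<le> (k - 1) * cc N + SS n (N + r)" using C7[OF \<open>k \<ge> 1\<close>] kr by simp
  also have "\<dots> = BB p" using kr j BB_kr by simp
  finally show ?thesis using BB_le_Phi order_trans by blast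
qed

end


context ar begin

lemma final:
  assumes r: "r < N" and k: "k \<ge> 1"
  shows "real (Phi (k * N + r)) = (real (n - 2) * real (k * N + r) - real r * (real n - 1 - real r)) / 2
     + real_of_int (max 0 \<lfloor>(real r * (real n - 4 - real r) - 3 * (real n - 1)) / 2\<rfloor>)"
proof -
  obtain j where j: "k = Suc j" using k by (cases k) auto
  define A where "A = k * cc N + cc r"
  define B where "B = j * cc N + SS n (N + r)"
  have Phi: "Phi (k * N + r) = max A B"
    unfolding Phi_def A_def B_def j by (simp only: AA_kr[OF r] BB_kr[OF r])
  define Y :: int where "Y = int r * (int n - 4 - int r) - 3 * (int n - 1)"
  have h1: "real r * (real n - 4 - real r) - 3 * (real n - 1) = real_of_int Y" unfolding Y_def by simp
  have h2: "\<lfloor>real_of_int Y / 2\<rfloor> = Y div 2" using floor_divide_of_int_eq[of Y 2] by simp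
  have n5: "n \<ge> 5" using n10 by simp
  have SSi: "int (SS n (N + r)) = ((int n - 5) * (int N + int r)) div 2"
    unfolding SS_def using n5 by (simp add: zdiv_int of_nat_diff)
  have CC: "2 * (int (cc N) + int (cc r)) = int N * (int N - 1) + int r * (int r - 1)"
    using cc_int[of N] cc_int[of r] by simp
  have XY: "(int n - 5) * (int N + int r) = Y + 2 * (int (cc N) + int (cc r))"
    unfolding CC Y_def using iN by (simp add: algebra_simps)
  have h3: "int B - int A = Y div 2"
  proof -
    have "int B - int A = int (SS n (N + r)) - (int (cc N) + int (cc r))"
      unfolding A_def B_def j by (simp add: algebra_simps)
    also have "\<dots> = (Y + 2 * (int (cc N) + int (cc r))) div 2 - (int (cc N) + int (cc r))"
      unfolding SSi XY ..
    also have "\<dots> = Y div 2" by simp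
    finally show ?thesis .
  qed
  have h4: "2 * real A = real (n - 2) * real (k * N + r) - real r * (real n - 1 - real r)"
  proof -
    have c1: "2 * real (cc N) = real N * (real N - 1)" using cc_int[of N]
      by (metis (mono_tags, opaque_lifting) of_int_of_nat_eq of_int_1 of_int_diff of_int_mult of_int_numeral)
    have c2: "2 * real (cc r) = real r * (real r - 1)" using cc_int[of r]
      by (metis (mono_tags, opaque_lifting) of_int_of_nat_eq of_int_1 of_int_diff of_int_mult of_int_numeral)
    have rn: "real n = real N + 1" using iN by (metis of_int_of_nat_eq of_int_1 of_int_add)
    have rn2: "real (n - 2) = real N - 1" using NN n10 by (simp add: of_nat_diff)
    have "2 * real A = real k * (2 * real (cc N)) + 2 * real (cc r)" unfolding A_def by (simp add: algebra_simps)
    also have "\<dots> = real k * (real N * (real N - 1)) + real r * (real r - 1)" unfolding c1 c2 ..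
    also have "\<dots> = real (n - 2) * real (k * N + r) - real r * (real n - 1 - real r)"
      unfolding rn rn2 by (simp add: algebra_simps)
    finally show ?thesis .
  qed
  have "real (max A B) = real A + real_of_int (max 0 (int B - int A))"
    by (cases "A \<le> B") (auto simp: max_def)
  then show ?thesis unfolding Phi h1 h2 h3[symmetric] using h4 by simp
qed

end


context treeT begin

lemma sparse_graph:
  assumes q: "n \<le> q"
  shows "SS n q \<le> ex q VT ET"
proof -
  define d where "d = n - 5"
  define t where "t = d div 2"
  define h where "h = q div 2"
  define nb where "nb = (\<lambda>i j. if i + j < q then i + j else i + j - q)"
  have t2: "2 * t < q" using q n10 unfolding t_def d_def by linarith
  have th: "t < h" using q n10 unfolding t_def d_def h_def by linarith
  have hh: "h + h \<le> q" unfolding h_def by linarith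
  have h1: "1 \<le> h" using q n10 unfolding h_def by linarith
  define Cs where "Cs = (\<lambda>(i,j). {i, nb i j}) ` ({0..<q} \<times> {1..t})"
  define Ms where "Ms = (if odd d then (\<lambda>i. {i, i + h}) ` {0..<h} else {})"
  define E where "E = Cs \<union> Ms"
  have injC: "inj_on (\<lambda>(i,j). {i, nb i j}) ({0..<q} \<times> {1..t})"
  proof (rule inj_onI, clarify)
    fix i j i' j'
    assume a: "i \<in> {0..<q}" "j \<in> {1..t}" "i' \<in> {0..<q}" "j' \<in> {1..t}" "{i, nb i j} = {i', nb i' j'}"
    then show "i = i' \<and> j = j'" using t2 unfolding nb_def doubleton_eq_iff
      by (auto split: if_splits)
  qed
  have cardC: "card Cs = q * t" unfolding Cs_def using card_image[OF injC] by (simp add: card_cartesian_product)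
  have injM: "inj_on (\<lambda>i. {i, i + h}) {0..<h}"
    by (rule inj_onI) (auto simp: doubleton_eq_iff)
  have cardM: "card Ms = (if odd d then h else 0)" unfolding Ms_def using card_image[OF injM] by simp
  have disj: "Cs \<inter> Ms = {}"
  proof (rule ccontr)
    assume "Cs \<inter> Ms \<noteq> {}"
    then obtain i j i' where a: "i < q" "1 \<le> j" "j \<le> t" "i' < h" "{i, nb i j} = {i', i' + h}"
      unfolding Cs_def Ms_def by (auto split: if_splits)
    then show False using th hh unfolding nb_def doubleton_eq_iff by (auto split: if_splits)
  qed
  have finC: "finite Cs" unfolding Cs_def by simp
  have finM: "finite Ms" unfolding Ms_def by simp
  have cardE: "card E = q * t + (if odd d then h else 0)"
    unfolding E_def using card_Un_disjoint[OF finC finM disj] cardC cardM by simp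
  have SSq: "SS n q = q * t + (if odd d then h else 0)"
  proof (cases "odd d")
    case True
    then have "d = 2 * t + 1" unfolding t_def by presburger
    then have "(n - 5) * q = 2 * (q * t) + q" unfolding d_def by (simp add: algebra_simps)
    then show ?thesis using True unfolding SS_def h_def by simp
  next
    case False
    then have "d = 2 * t" unfolding t_def by presburger
    then have eq: "(n - 5) * q = 2 * (q * t)" unfolding d_def by (simp add: algebra_simps)
    have "SS n q = 2 * (q * t) div 2" unfolding SS_def eq ..
    then show ?thesis using False by simp
  qed
  have sg: "simple_graph {0..<q} E"
    unfolding simple_graph_def
  proof (intro conjI ballI)
    show "finite {0..<q}" by simp
    fix e assume "e \<in> E"
    then show "\<exists>u v. u \<noteq> v \<and> u \<in> {0..<q} \<and> v \<in> {0..<q} \<and> e = {u, v}"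
      unfolding E_def Cs_def Ms_def
    proof (elim UnE)
      assume "e \<in> (\<lambda>(i, j). {i, nb i j}) ` ({0..<q} \<times> {1..t})"
      then obtain i j where "i < q" "1 \<le> j" "j \<le> t" "e = {i, nb i j}" by auto
      then show ?thesis using t2 unfolding nb_def by (intro exI[of _ i] exI[of _ "nb i j"]) (auto simp: nb_def)
    next
      assume "e \<in> (if odd d then (\<lambda>i. {i, i + h}) ` {0..<h} else {})"
      then obtain i where "i < h" "e = {i, i + h}" by (auto split: if_splits)
      then show ?thesis using hh h1 by (intro exI[of _ i] exI[of _ "i + h"]) auto
    qed
  qed
  have deg: "\<forall>v\<in>{0..<q}. degree {0..<q} E v \<le> n - 5"
  proof
    fix v assume v: "v \<in> {0..<q}"
    let ?S = "(\<lambda>j. nb v j) ` {1..t} \<union> (\<lambda>j. if j \<le> v then v - j else v + q - j) ` {1..t}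
              \<union> (if odd d then {if v < h then v + h else v - h} else {})"
    have sub: "{u \<in> {0..<q}. {u, v} \<in> E} \<subseteq> ?S"
    proof
      fix u assume "u \<in> {u \<in> {0..<q}. {u, v} \<in> E}"
      then have u: "u < q" "{u, v} \<in> Cs \<or> {u,v} \<in> Ms" unfolding E_def by auto
      show "u \<in> ?S"
      proof (cases "{u, v} \<in> Cs")
        case True
        then obtain i j where a: "i < q" "1 \<le> j" "j \<le> t" "{u, v} = {i, nb i j}" unfolding Cs_def by auto
        then have "(u = i \<and> v = nb i j) \<or> (u = nb i j \<and> v = i)" by (auto simp: doubleton_eq_iff)
        then show ?thesis
        proof
          assume b: "u = i \<and> v = nb i j"
          then have "u = (if j \<le> v then v - j else v + q - j)" using a t2 unfolding nb_def by (auto split: if_splits)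
          then show ?thesis using a by auto
        next
          assume b: "u = nb i j \<and> v = i"
          then show ?thesis using a by auto
        qed
      next
        case False
        then have M: "{u,v} \<in> Ms" using u by auto
        then obtain i where a: "odd d" "i < h" "{u, v} = {i, i + h}" unfolding Ms_def by (auto split: if_splits)
        then have "u = (if v < h then v + h else v - h)" by (auto simp: doubleton_eq_iff)
        then show ?thesis using a by auto
      qed
    qed
    have "card ?S \<le> card ((\<lambda>j. nb v j) ` {1..t}) + card ((\<lambda>j. if j \<le> v then v - j else v + q - j) ` {1..t})
              + card (if odd d then {if v < h then v + h else v - h} else {})"
      by (meson card_Un_le add_le_mono le_refl order_trans)
    also have "\<dots> \<le> t + t + (if odd d then 1 else 0)"
    proof (intro add_mono)
      have ct: "card {1..t} = t" by simp
      have "card ((\<lambda>j. nb v j) ` {1..t}) \<le> card {1..t}" by (rule card_image_le) simp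
      then show "card ((\<lambda>j. nb v j) ` {1..t}) \<le> t" using ct by linarith
      have "card ((\<lambda>j. if j \<le> v then v - j else v + q - j) ` {1..t}) \<le> card {1..t}" by (rule card_image_le) simp
      then show "card ((\<lambda>j. if j \<le> v then v - j else v + q - j) ` {1..t}) \<le> t" using ct by linarith
      show "card (if odd d then {if v < h then v + h else v - h} else {}) \<le> (if odd d then 1 else 0)" by simp
    qed
    also have "\<dots> = n - 5" unfolding t_def d_def by presburger
    finally have "card ?S \<le> n - 5" .
    moreover have "card {u \<in> {0..<q}. {u, v} \<in> E} \<le> card ?S" by (rule card_mono[OF _ sub]) simp
    ultimately show "degree {0..<q} E v \<le> n - 5" unfolding degree_def by linarith
  qed
  have "E \<in> free_graphs q VT ET" unfolding free_graphs_def using sg nocopy_deg[OF _ deg] by simp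
  then have "card E \<le> ex q VT ET" by (rule ex_ge)
  then show ?thesis using cardE SSq by simp
qed

end


context treeT begin

lemma clique_lower:
  assumes "p < n" shows "cc p \<le> ex p VT ET"
proof -
  define K where "K = {e. e \<subseteq> {0..<p} \<and> card e = 2}"
  have sg: "simple_graph {0..<p} K"
    unfolding simple_graph_def
  proof (intro conjI ballI)
    show "finite {0..<p}" by simp
    fix e assume "e \<in> K"
    then have e: "e \<subseteq> {0..<p}" "card e = 2" unfolding K_def by auto
    then obtain x y where xy: "e = {x,y}" "x \<noteq> y" unfolding card_2_iff by blast
    then show "\<exists>u v. u \<noteq> v \<and> u \<in> {0..<p} \<and> v \<in> {0..<p} \<and> e = {u, v}" using e(1) by blast
  qed
  have "K \<in> free_graphs p VT ET" unfolding free_graphs_def using sg nocopy_small[of "{0..<p}"] assms by simp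
  then have "card K \<le> ex p VT ET" by (rule ex_ge)
  moreover have "card K = cc p" unfolding K_def
    using n_subsets[of "{0..<p}" 2] by (simp add: choose_two cc_def)
  ultimately show ?thesis by simp
qed

lemma sg_edges: "simple_graph V E \<Longrightarrow> e \<in> E \<Longrightarrow> e \<subseteq> V \<and> e \<noteq> {}"
  unfolding simple_graph_def by auto

lemma ex_superadd: "ex a VT ET + ex b VT ET \<le> ex (a + b) VT ET"
proof -
  obtain E1 where E1: "E1 \<in> free_graphs a VT ET" "card E1 = ex a VT ET" using ex_attained[OF free_ne] by blast
  obtain E2 where E2: "E2 \<in> free_graphs b VT ET" "card E2 = ex b VT ET" using ex_attained[OF free_ne] by blast
  have sg1: "simple_graph {0..<a} E1" and nc1: "\<not> contains_copy VT ET {0..<a} E1"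
    using E1 unfolding free_graphs_def by auto
  have sg2: "simple_graph {0..<b} E2" and nc2: "\<not> contains_copy VT ET {0..<b} E2"
    using E2 unfolding free_graphs_def by auto
  define g where "g = (\<lambda>x::nat. x + a)"
  have inj: "inj_on g {0..<b}" unfolding g_def by (simp add: inj_on_def)
  have im: "g ` {0..<b} = {a..<a + b}" unfolding g_def by (simp add: add.commute)
  define E2' where "E2' = (`) g ` E2"
  note I = iso_graph[OF inj sg2, unfolded im, folded E2'_def]
  have sg2': "simple_graph {a..<a+b} E2'" using I(1) .
  have "contains_copy VT ET {a..<a+b} E2' \<longleftrightarrow> contains_copy VT ET {0..<b} E2" by (rule I(3))
  then have nc2': "\<not> contains_copy VT ET {a..<a+b} E2'" using nc2 by simp
  have s1: "\<forall>e\<in>E1. e \<subseteq> {0..<a}" using sg_edges[OF sg1] by auto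
  have s2: "\<forall>e\<in>E2'. e \<subseteq> {a..<a+b}" using sg_edges[OF sg2'] by auto
  have disj: "{0..<a} \<inter> {a..<a+b} = {}" by auto
  have U: "{0..<a} \<union> {a..<a+b} = {0..<a+b}" by auto
  have nc: "\<not> contains_copy VT ET {0..<a+b} (E1 \<union> E2')"
    using union_nocopy[OF nc1 nc2' s1 s2 disj] U by simp
  have sg: "simple_graph {0..<a+b} (E1 \<union> E2')"
    unfolding simple_graph_def
  proof (intro conjI ballI)
    show "finite {0..<a+b}" by simp
    fix e assume "e \<in> E1 \<union> E2'"
    then show "\<exists>u v. u \<noteq> v \<and> u \<in> {0..<a+b} \<and> v \<in> {0..<a+b} \<and> e = {u, v}"
    proof
      assume "e \<in> E1"
      then obtain u v where "u \<noteq> v" "u \<in> {0..<a}" "v \<in> {0..<a}" "e = {u,v}"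
        using sg1 unfolding simple_graph_def by blast
      then show ?thesis by (intro exI[of _ u] exI[of _ v]) auto
    next
      assume "e \<in> E2'"
      then obtain u v where "u \<noteq> v" "u \<in> {a..<a+b}" "v \<in> {a..<a+b}" "e = {u,v}"
        using sg2' unfolding simple_graph_def by blast
      then show ?thesis by (intro exI[of _ u] exI[of _ v]) auto
    qed
  qed
  have ed: "E1 \<inter> E2' = {}"
  proof (rule ccontr)
    assume "E1 \<inter> E2' \<noteq> {}"
    then obtain e where "e \<in> E1" "e \<in> E2'" by auto
    then have "e \<subseteq> {0..<a}" "e \<subseteq> {a..<a+b}" "e \<noteq> {}" using s1 s2 sg_edges[OF sg1] by auto
    then show False using disj by blast
  qed
  have "card (E1 \<union> E2') = card E1 + card E2'"
    by (rule card_Un_disjoint[OF simple_graph_finite[OF sg1] simple_graph_finite[OF sg2'] ed])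
  moreover have "card E2' = card E2" using I(2) .
  moreover have "E1 \<union> E2' \<in> free_graphs (a + b) VT ET" unfolding free_graphs_def using sg nc by simp
  ultimately have "card E1 + card E2 \<le> ex (a + b) VT ET" using ex_ge by metis
  then show ?thesis using E1(2) E2(2) by simp
qed

lemma ex_mult: "k * ex m VT ET \<le> ex (k * m) VT ET"
proof (induction k)
  case 0 then show ?case by simp
next
  case (Suc k)
  have "Suc k * ex m VT ET = ex m VT ET + k * ex m VT ET" by simp
  also have "\<dots> \<le> ex m VT ET + ex (k * m) VT ET" using Suc by simp
  also have "\<dots> \<le> ex (m + k * m) VT ET" by (rule ex_superadd)
  finally show ?case by simp
qed

lemma upper_cases:
  assumes H: "\<forall>m\<ge>n. \<forall>E\<in>Ex m VT ET. connected_graph {0..<m} E \<longrightarrow> max_degree {0..<m} E \<le> n - 5"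
    and p: "n \<le> p"
  shows "2 * ex p VT ET \<le> p * (n - 5) \<or>
         (\<exists>a b. 0 < a \<and> 0 < b \<and> a + b = p \<and> ex p VT ET \<le> ex a VT ET + ex b VT ET)"
proof -
  obtain E where E: "E \<in> free_graphs p VT ET" "card E = ex p VT ET" using ex_attained[OF free_ne] by blast
  have sg: "simple_graph {0..<p} E" and nc: "\<not> contains_copy VT ET {0..<p} E"
    using E unfolding free_graphs_def by auto
  show ?thesis
  proof (cases "connected_graph {0..<p} E")
    case True
    have "E \<in> Ex p VT ET" unfolding Ex_def using E by simp
    then have md: "max_degree {0..<p} E \<le> n - 5" using H p True by blast
    have "\<forall>v\<in>{0..<p}. degree {0..<p} E v \<le> n - 5"
    proof
      fix v assume "v \<in> {0..<p}"
      then have "degree {0..<p} E v \<le> max_degree {0..<p} E" unfolding max_degree_def by (intro Max_ge) auto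
      then show "degree {0..<p} E v \<le> n - 5" using md by simp
    qed
    from edges_deg_bound[OF sg this] show ?thesis using E by simp
  next
    case False
    have ne: "{0..<p} \<noteq> {}" using p n10 by auto
    then obtain u w where uw: "u \<in> {0..<p}" "w \<in> {0..<p}" "\<not> (adj E)\<^sup>*\<^sup>* u w"
      using False unfolding connected_graph_def by blast
    define V where "V = {0..<p::nat}"
    define C where "C = {x \<in> V. (adj E)\<^sup>*\<^sup>* u x}"
    define R where "R = V - C"
    have uC: "u \<in> C" unfolding C_def V_def using uw by auto
    have wR: "w \<in> R" unfolding R_def C_def V_def using uw by auto
    have CV: "C \<subseteq> V" and RV: "R \<subseteq> V" and CR: "C \<inter> R = {}" and CRV: "C \<union> R = V"
      unfolding C_def R_def by auto
    have finV: "finite V" unfolding V_def by simp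
    have side: "\<forall>e\<in>E. e \<subseteq> C \<or> e \<subseteq> R"
    proof
      fix e assume e: "e \<in> E"
      then obtain x y where xy: "x \<in> V" "y \<in> V" "e = {x, y}" using sg unfolding simple_graph_def V_def by blast
      have "x \<in> C \<longleftrightarrow> y \<in> C"
      proof
        assume "x \<in> C"
        then have "(adj E)\<^sup>*\<^sup>* u x" unfolding C_def by auto
        moreover have "adj E x y" unfolding adj_def using e xy by simp
        ultimately show "y \<in> C" unfolding C_def using xy by auto
      next
        assume "y \<in> C"
        then have "(adj E)\<^sup>*\<^sup>* u y" unfolding C_def by auto
        moreover have "adj E y x" unfolding adj_def using e xy by (simp add: insert_commute)
        ultimately show "x \<in> C" unfolding C_def using xy by auto
      qed
      then show "e \<subseteq> C \<or> e \<subseteq> R" using xy unfolding R_def by auto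
    qed
    define E1 where "E1 = {e \<in> E. e \<subseteq> C}"
    define E2 where "E2 = {e \<in> E. e \<subseteq> R}"
    have EU: "E = E1 \<union> E2" unfolding E1_def E2_def using side by auto
    have ed: "E1 \<inter> E2 = {}"
    proof (rule ccontr)
      assume "E1 \<inter> E2 \<noteq> {}"
      then obtain e where "e \<in> E" "e \<subseteq> C" "e \<subseteq> R" unfolding E1_def E2_def by auto
      then show False using sg_edges[OF sg] CR by blast
    qed
    have finE: "finite E" using simple_graph_finite[OF sg] .
    have sg1: "simple_graph C E1"
      unfolding simple_graph_def
    proof (intro conjI ballI)
      show "finite C" using finV CV by (rule finite_subset[rotated])
      fix e assume e: "e \<in> E1"
      then have "e \<in> E" unfolding E1_def by simp
      then obtain x y where "x \<noteq> y" "e = {x,y}" using sg unfolding simple_graph_def by blast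
      moreover have "e \<subseteq> C" using e unfolding E1_def by auto
      ultimately show "\<exists>u v. u \<noteq> v \<and> u \<in> C \<and> v \<in> C \<and> e = {u, v}" by blast
    qed
    have sg2: "simple_graph R E2"
      unfolding simple_graph_def
    proof (intro conjI ballI)
      show "finite R" using finV RV by (rule finite_subset[rotated])
      fix e assume e: "e \<in> E2"
      then have "e \<in> E" unfolding E2_def by simp
      then obtain x y where "x \<noteq> y" "e = {x,y}" using sg unfolding simple_graph_def by blast
      moreover have "e \<subseteq> R" using e unfolding E2_def by auto
      ultimately show "\<exists>u v. u \<noteq> v \<and> u \<in> R \<and> v \<in> R \<and> e = {u, v}" by blast
    qed
    have mono: "contains_copy VT ET V E" if a: "contains_copy VT ET V' E'" "V' \<subseteq> V" "E' \<subseteq> E" for V' E'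
    proof -
      obtain f where f: "inj_on f VT" "f ` VT \<subseteq> V'" "\<forall>e\<in>ET. f ` e \<in> E'"
        using a(1) unfolding contains_copy_def by blast
      have "f ` VT \<subseteq> V" using f(2) a(2) by (rule subset_trans)
      moreover have "\<forall>e\<in>ET. f ` e \<in> E" using f(3) a(3) by blast
      ultimately show ?thesis unfolding contains_copy_def using f(1) by blast
    qed
    have nc1: "\<not> contains_copy VT ET C E1" using mono[of C E1] nc CV unfolding E1_def V_def by auto
    have nc2: "\<not> contains_copy VT ET R E2" using mono[of R E2] nc RV unfolding E2_def V_def by auto
    have "card E = card E1 + card E2" unfolding EU
      by (rule card_Un_disjoint) (use finE EU ed in auto)
    also have "\<dots> \<le> ex (card C) VT ET + ex (card R) VT ET"
      using transport[OF sg1 nc1] transport[OF sg2 nc2] by simp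
    finally have le: "ex p VT ET \<le> ex (card C) VT ET + ex (card R) VT ET" using E by simp
    have "card C + card R = p" using card_Un_disjoint[of C R] CRV CR finV CV RV
      by (metis V_def card_atLeastLessThan diff_zero finite_subset)
    moreover have "0 < card C" using uC finV CV by (metis card_gt_0_iff empty_iff finite_subset)
    moreover have "0 < card R" using wR finV RV by (metis card_gt_0_iff empty_iff finite_subset)
    ultimately show ?thesis using le by blast
  qed
qed

end


locale mainL = treeT VT ET n + ar n N for VT :: "'a set" and ET n N +
  assumes H: "\<forall>m\<ge>n. \<forall>E\<in>Ex m VT ET. connected_graph {0..<m} E \<longrightarrow> max_degree {0..<m} E \<le> n - 5"
begin

lemma ex_small: "ex p VT ET \<le> cc p"
proof -
  obtain E where E: "E \<in> free_graphs p VT ET" "card E = ex p VT ET" using ex_attained[OF free_ne] by blast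
  have sg: "simple_graph {0..<p} E" using E unfolding free_graphs_def by auto
  show ?thesis using edges_clique_bound[OF sg] E by (simp add: cc_def)
qed

lemma upper: "ex p VT ET \<le> Phi p"
proof (induction p rule: less_induct)
  case (less p)
  show ?case
  proof (cases "p \<le> N")
    case True
    then show ?thesis using ex_small[of p] Phi_small[OF True] by linarith
  next
    case False
    then have pn: "n \<le> p" using NN n10 by linarith
    from upper_cases[OF H pn] show ?thesis
    proof
      assume "2 * ex p VT ET \<le> p * (n - 5)"
      then have "ex p VT ET \<le> SS n p" unfolding SS_def by (simp add: mult.commute)
      then show ?thesis using Phi_big[OF pn] by linarith
    next
      assume "\<exists>a b. 0 < a \<and> 0 < b \<and> a + b = p \<and> ex p VT ET \<le> ex a VT ET + ex b VT ET"
      then obtain a b where ab: "0 < a" "0 < b" "a + b = p" "ex p VT ET \<le> ex a VT ET + ex b VT ET" by blast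
      have "ex a VT ET \<le> Phi a" using less ab by simp
      moreover have "ex b VT ET \<le> Phi b" using less ab by simp
      moreover have "Phi a + Phi b \<le> Phi p" using Phi_superadd[of a b] ab(3) by simp
      ultimately show ?thesis using ab(4) by linarith
    qed
  qed
qed

lemma lower: "Phi p \<le> ex p VT ET"
proof -
  obtain k r where kr: "p = k * N + r" "r < N" by (rule decomp)
  have Nn: "N < n" using NN n10 by simp
  have ccN: "cc N \<le> ex N VT ET" using clique_lower Nn by simp
  have ccr: "cc r \<le> ex r VT ET" using clique_lower kr Nn by simp
  have A: "AA p \<le> ex p VT ET"
  proof -
    have "AA p = k * cc N + cc r" using kr AA_kr by simp
    also have "\<dots> \<le> k * ex N VT ET + ex r VT ET" using ccN ccr by (simp add: add_mono)
    also have "\<dots> \<le> ex (k * N) VT ET + ex r VT ET" using ex_mult[of k N] by simp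
    also have "\<dots> \<le> ex (k * N + r) VT ET" by (rule ex_superadd)
    finally show ?thesis using kr by simp
  qed
  have B: "BB p \<le> ex p VT ET"
  proof (cases k)
    case 0
    then show ?thesis using kr BB0 by simp
  next
    case (Suc j)
    have S: "SS n (N + r) \<le> ex (N + r) VT ET"
    proof (cases "r = 0")
      case True
      have l: "n - 5 \<le> N - 1" using NN by simp
      have "(n - 5) * N \<le> N * (N - 1)" using mult_le_mono1[OF l, of N] by (simp add: mult.commute)
      then have "SS n N \<le> cc N" unfolding SS_def cc_def by (rule div_le_mono)
      then show ?thesis using True ccN by simp
    next
      case False
      then show ?thesis using sparse_graph NN n10 by simp
    qed
    have "BB p = j * cc N + SS n (N + r)" using kr Suc BB_kr by simp
    also have "\<dots> \<le> j * ex N VT ET + ex (N + r) VT ET" using ccN S by (simp add: add_mono)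
    also have "\<dots> \<le> ex (j * N) VT ET + ex (N + r) VT ET" using ex_mult[of j N] by simp
    also have "\<dots> \<le> ex (j * N + (N + r)) VT ET" by (rule ex_superadd)
    finally show ?thesis using kr Suc by (simp add: algebra_simps)
  qed
  show ?thesis using A B unfolding Phi_def by simp
qed

end

theorem lemma2p10:
  fixes n p k r :: nat and VT :: "'a set" and ET :: "'a set set"
  assumes "n \<ge> 10"
    and "is_tree VT ET" and "card VT = n" and "max_degree VT ET = n - 4"
    and "\<forall>m\<ge>n. \<forall>E\<in>Ex m VT ET. connected_graph {0..<m} E \<longrightarrow> max_degree {0..<m} E \<le> n - 5"
    and "p = k * (n - 1) + r" and "r \<le> n - 2" and "p \<ge> n - 1"
  shows "real (ex p VT ET) =
     (real (n - 2) * real p - real r * (real n - 1 - real r)) / 2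
     + real_of_int (max 0 \<lfloor>(real r * (real n - 4 - real r) - 3 * (real n - 1)) / 2\<rfloor>)"
proof -
  interpret M: mainL VT ET n "n - 1"
    by unfold_locales (use assms in auto)
  have r: "r < n - 1" using assms by linarith
  have k: "k \<ge> 1" using assms r by (cases k) auto
  have "ex p VT ET = M.Phi p" using M.upper M.lower by (simp add: antisym)
  then show ?thesis using M.final[OF r k] assms(6) by simp
qed


end
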